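(* Let $O=\operatorname{Out}^0(A_\Gamma;\mathcal{G},\mathcal{H}^t)$ with $\mathcal{G}$ saturated with respect to $(\mathcal{G},\mathcal{H})$. Let $\operatorname{Aut}(\Gamma)$ be embedded in $\operatorname{Out}(A_\Gamma)$ via permutation of generators and set $\operatorname{Aut}^0(\Gamma)=\operatorname{Aut}(\Gamma)\cap O$. Then $\operatorname{Aut}^0(\Gamma)$ is naturally isomorphic to $\bigoplus_{[v]\in T_\mathcal{G}}\operatorname{Sym}([v])$, i.e. it consists exactly of the graph automorphisms preserving each $\sim$-class setwise, and every permutation of each class (fixing all other vertices) is a graph automorphism lying in $O$.
   Context: $\Gamma$ is a finite simplicial graph with vertex set $V(\Gamma)$. Subgraphs are always full subgraphs and are identified with their vertex sets. $A_\Gamma$ is the right-angled Artin group generated by $V(\Gamma)$ with relations $[v,w]=1$ for adjacent $v,w$. For $\Delta\subseteq\Gamma$, the special subgroup $A_\Delta\le A_\Gamma$ is the subgroup generated by $\Delta$. $\operatorname{lk}(v)$ is the set of vertices adjacent to $v$ and $\operatorname{st}(v)=\operatorname{lk}(v)\cup\{v\}$. An outer automorphism $\Phi$ stabilises a subgroup $H$ if some representative $\phi\in\Phi$ satisfies $\phi(H)=H$, and acts trivially on $H$ if some representative restricts to the identity on $H$. The Laurence generators of $\operatorname{Out}(A_\Gamma)$ are the classes of: inversions $\iota_v$ ($v\mapsto v^{-1}$); transvections $\rho_v^w$ for $v\neq w$ with $\operatorname{lk}(v)\subseteq\operatorname{st}(w)$ ($v\mapsto vw$); partial conjugations $\pi_K^v$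 for $K$ a union of connected components of $\Gamma\setminus\operatorname{st}(v)$ ($u\mapsto vuv^{-1}$ for $u\in K$); all other generators being fixed. $\operatorname{Out}^0(A_\Gamma)$ is the subgroup of $\operatorname{Out}(A_\Gamma)$ generated by these. For families $\mathcal{G},\mathcal{H}$ of special subgroups, $\operatorname{Out}^0(A_\Gamma;\mathcal{G},\mathcal{H}^t)$ is the subgroup of $\operatorname{Out}^0(A_\Gamma)$ consisting of elements stabilising every member of $\mathcal{G}$ and acting trivially on every member of $\mathcal{H}$. $\mathcal{G}$ is saturated with respect to $(\mathcal{G},\mathcal{H})$ if it contains every proper special subgroup of $A_\Gamma$ stabilised by $\operatorname{Out}^0(A_\Gamma;\mathcal{G},\mathcal{H}^t)$. The $\mathcal{G}$-ordering $\preceq$ on $V(\Gamma)$: $v\preceq w$ iff $\operatorname{lk}(v)\subseteq\operatorname{st}(w)$ and for every $A_\Delta\in\mathcal{G}$ with $v\in\Delta$ also $w\in\Delta$; $v\sim w$ iff $v\preceq w$ and $w\preceq v$; $[v]$ denotes the equivalence class and $T_\mathcal{G}$ the set of classes. *)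

theory Defs
  imports Main
begin

text \<open>Graph: finite vertex type 'v, adjacency relation E (assumed symmetric, irreflexive).
  Elements of the right-angled Artin group A_Gamma are represented by words
  (lists of letters (v, b), b = True meaning the inverse generator v^-1),
  modulo the congruence raag_eq E.\<close>

type_synonym 'v word = "('v \<times> bool) list"

definition inv_letter :: "'v \<times> bool \<Rightarrow> 'v \<times> bool" where
  "inv_letter x = (fst x, \<not> snd x)"

definition inv_word :: "'v word \<Rightarrow> 'v word" where
  "inv_word w = rev (map inv_letter w)"

inductive raag_eq :: "('v \<Rightarrow> 'v \<Rightarrow> bool) \<Rightarrow> 'v word \<Rightarrow> 'v word \<Rightarrow> bool"
  for E :: "'v \<Rightarrow> 'v \<Rightarrow> bool" where
  refl: "raag_eq E w w"
| sym: "raag_eq E u w \<Longrightarrow> raag_eq E w u"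
| trans: "raag_eq E u w \<Longrightarrow> raag_eq E w z \<Longrightarrow> raag_eq E u z"
| cancel: "raag_eq E (u @ [x, inv_letter x] @ w) (u @ w)"
| comm: "E (fst x) (fst y) \<Longrightarrow> raag_eq E (u @ [x, y] @ w) (u @ [y, x] @ w)"

definition gen :: "'v \<Rightarrow> 'v word" where
  "gen v = [(v, False)]"

text \<open>An endomorphism is given by the images of the generators.\<close>
definition ext :: "('v \<Rightarrow> 'v word) \<Rightarrow> 'v word \<Rightarrow> 'v word" where
  "ext f w = concat (map (\<lambda>x. if snd x then inv_word (f (fst x)) else f (fst x)) w)"

definition comp :: "('v \<Rightarrow> 'v word) \<Rightarrow> ('v \<Rightarrow> 'v word) \<Rightarrow> 'v \<Rightarrow> 'v word" where
  "comp f g = (\<lambda>v. ext f (g v))"   \<comment> \<open>first g, then f\<close>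

definition is_endo :: "('v \<Rightarrow> 'v \<Rightarrow> bool) \<Rightarrow> ('v \<Rightarrow> 'v word) \<Rightarrow> bool" where
  "is_endo E f \<longleftrightarrow> (\<forall>u v. E u v \<longrightarrow> raag_eq E (f u @ f v) (f v @ f u))"

definition inverse_auts :: "('v \<Rightarrow> 'v \<Rightarrow> bool) \<Rightarrow> ('v \<Rightarrow> 'v word) \<Rightarrow> ('v \<Rightarrow> 'v word) \<Rightarrow> bool" where
  "inverse_auts E f g \<longleftrightarrow> is_endo E f \<and> is_endo E g \<and>
     (\<forall>v. raag_eq E (comp f g v) (gen v)) \<and> (\<forall>v. raag_eq E (comp g f v) (gen v))"

definition inner :: "'v word \<Rightarrow> 'v \<Rightarrow> 'v word" where
  "inner c = (\<lambda>v. c @ gen v @ inv_word c)"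

definition lk :: "('v \<Rightarrow> 'v \<Rightarrow> bool) \<Rightarrow> 'v \<Rightarrow> 'v set" where
  "lk E v = {u. E v u}"

definition st :: "('v \<Rightarrow> 'v \<Rightarrow> bool) \<Rightarrow> 'v \<Rightarrow> 'v set" where
  "st E v = insert v (lk E v)"

definition inversion :: "'v \<Rightarrow> 'v \<Rightarrow> 'v word" where
  "inversion v = (\<lambda>u. if u = v then [(v, True)] else gen u)"

definition transvection :: "'v \<Rightarrow> 'v \<Rightarrow> 'v \<Rightarrow> 'v word" where
  "transvection v w = (\<lambda>u. if u = v then [(v, False), (w, False)] else gen u)"

definition partial_conj :: "'v \<Rightarrow> 'v set \<Rightarrow> 'v \<Rightarrow> 'v word" where
  "partial_conj v K = (\<lambda>u. if u \<in> K then [(v, False), (u, False), (v, True)] else gen u)"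

definition union_of_components :: "('v \<Rightarrow> 'v \<Rightarrow> bool) \<Rightarrow> 'v \<Rightarrow> 'v set \<Rightarrow> bool" where
  "union_of_components E v K \<longleftrightarrow> K \<inter> st E v = {} \<and>
     (\<forall>a b. a \<in> K \<longrightarrow> b \<notin> st E v \<longrightarrow> E a b \<longrightarrow> b \<in> K)"

definition laurence :: "('v \<Rightarrow> 'v \<Rightarrow> bool) \<Rightarrow> ('v \<Rightarrow> 'v word) \<Rightarrow> bool" where
  "laurence E f \<longleftrightarrow> (\<exists>v. f = inversion v)
     \<or> (\<exists>v w. v \<noteq> w \<and> lk E v \<subseteq> st E w \<and> f = transvection v w)
     \<or> (\<exists>v K. union_of_components E v K \<and> f = partial_conj v K)"

text \<open>out0 E: all automorphisms (given by generator images) whose outer class lies in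
  Out^0(A_Gamma), the subgroup of Out(A_Gamma) generated by the Laurence generators.\<close>
inductive_set out0 :: "('v \<Rightarrow> 'v \<Rightarrow> bool) \<Rightarrow> ('v \<Rightarrow> 'v word) set"
  for E :: "'v \<Rightarrow> 'v \<Rightarrow> bool" where
  gen: "laurence E f \<Longrightarrow> f \<in> out0 E"
| inn: "inner c \<in> out0 E"
| comp: "f \<in> out0 E \<Longrightarrow> g \<in> out0 E \<Longrightarrow> comp f g \<in> out0 E"
| inv: "f \<in> out0 E \<Longrightarrow> inverse_auts E f g \<Longrightarrow> g \<in> out0 E"
| eq: "f \<in> out0 E \<Longrightarrow> (\<forall>v. raag_eq E (f v) (g v)) \<Longrightarrow> g \<in> out0 E"

text \<open>The special subgroup A_Delta, as the set of words representing its elements.\<close>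
definition special :: "('v \<Rightarrow> 'v \<Rightarrow> bool) \<Rightarrow> 'v set \<Rightarrow> 'v word set" where
  "special E \<Delta> = {w. \<exists>w'. set (map fst w') \<subseteq> \<Delta> \<and> raag_eq E w w'}"

definition image_of :: "('v \<Rightarrow> 'v \<Rightarrow> bool) \<Rightarrow> ('v \<Rightarrow> 'v word) \<Rightarrow> 'v word set \<Rightarrow> 'v word set" where
  "image_of E h S = {w. \<exists>u\<in>S. raag_eq E (ext h u) w}"

text \<open>The outer class of f stabilises A_Delta: some representative maps it onto itself.\<close>
definition stabilises :: "('v \<Rightarrow> 'v \<Rightarrow> bool) \<Rightarrow> ('v \<Rightarrow> 'v word) \<Rightarrow> 'v set \<Rightarrow> bool" where
  "stabilises E f \<Delta> \<longleftrightarrow> (\<exists>c. image_of E (comp (inner c) f) (special E \<Delta>) = special E \<Delta>)"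

definition acts_trivially :: "('v \<Rightarrow> 'v \<Rightarrow> bool) \<Rightarrow> ('v \<Rightarrow> 'v word) \<Rightarrow> 'v set \<Rightarrow> bool" where
  "acts_trivially E f \<Delta> \<longleftrightarrow>
     (\<exists>c. \<forall>w. set (map fst w) \<subseteq> \<Delta> \<longrightarrow> raag_eq E (ext (comp (inner c) f) w) w)"

text \<open>Membership (of the outer class of f) in Out^0(A_Gamma; G, H^t).
  Families of special subgroups are given by their vertex sets.\<close>
definition inO :: "('v \<Rightarrow> 'v \<Rightarrow> bool) \<Rightarrow> 'v set set \<Rightarrow> 'v set set \<Rightarrow> ('v \<Rightarrow> 'v word) \<Rightarrow> bool" where
  "inO E G H f \<longleftrightarrow> f \<in> out0 E \<and> (\<forall>\<Delta>\<in>G. stabilises E f \<Delta>) \<and> (\<forall>\<Delta>\<in>H. acts_trivially E f \<Delta>)"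

definition saturated :: "('v \<Rightarrow> 'v \<Rightarrow> bool) \<Rightarrow> 'v set set \<Rightarrow> 'v set set \<Rightarrow> bool" where
  "saturated E G H \<longleftrightarrow>
     (\<forall>\<Delta>. \<Delta> \<noteq> UNIV \<longrightarrow> (\<forall>f. inO E G H f \<longrightarrow> stabilises E f \<Delta>) \<longrightarrow> \<Delta> \<in> G)"

definition G_le :: "('v \<Rightarrow> 'v \<Rightarrow> bool) \<Rightarrow> 'v set set \<Rightarrow> 'v \<Rightarrow> 'v \<Rightarrow> bool" where
  "G_le E G v w \<longleftrightarrow> lk E v \<subseteq> st E w \<and> (\<forall>\<Delta>\<in>G. v \<in> \<Delta> \<longrightarrow> w \<in> \<Delta>)"

definition G_equiv :: "('v \<Rightarrow> 'v \<Rightarrow> bool) \<Rightarrow> 'v set set \<Rightarrow> 'v \<Rightarrow> 'v \<Rightarrow> bool" where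
  "G_equiv E G v w \<longleftrightarrow> G_le E G v w \<and> G_le E G w v"

definition graph_aut :: "('v \<Rightarrow> 'v \<Rightarrow> bool) \<Rightarrow> ('v \<Rightarrow> 'v) \<Rightarrow> bool" where
  "graph_aut E \<sigma> \<longleftrightarrow> bij \<sigma> \<and> (\<forall>u v. E u v \<longleftrightarrow> E (\<sigma> u) (\<sigma> v))"

definition perm_aut :: "('v \<Rightarrow> 'v) \<Rightarrow> 'v \<Rightarrow> 'v word" where
  "perm_aut \<sigma> = (\<lambda>v. gen (\<sigma> v))"

end

theory Submission
  imports Defs "HOL-Combinatorics.Transposition"
begin


lemmas [trans] = raag_eq.trans

lemma inv_letter_inv[simp]: "inv_letter (inv_letter x) = x"
  by (simp add: inv_letter_def)
lemma inv_word_simps[simp]: "inv_word [] = []" "inv_word (x#w) = inv_word w @ [inv_letter x]"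
  "inv_word (u@w) = inv_word w @ inv_word u"
  by (auto simp: inv_word_def)
lemma inv_inv[simp]: "inv_word (inv_word w) = w"
  by (induction w) auto

lemma cong: "raag_eq E u w \<Longrightarrow> raag_eq E (p @ u @ q) (p @ w @ q)"
proof (induction rule: raag_eq.induct)
  case (refl w) then show ?case by (rule raag_eq.refl)
next
  case (sym u w) then show ?case by (blast intro: raag_eq.sym)
next
  case (trans u w z) then show ?case using raag_eq.trans by blast
next
  case (cancel u x w) then show ?case using raag_eq.cancel[of E "p@u" x "w@q"] by simp
next
  case (comm x y u w) then show ?case using raag_eq.comm[of E x y "p@u" "w@q"] by simp
qed

lemma congL: "raag_eq E u w \<Longrightarrow> raag_eq E (p @ u) (p @ w)"
  using cong[of E u w p "[]"] by simp
lemma congR: "raag_eq E u w \<Longrightarrow> raag_eq E (u @ q) (w @ q)"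
  using cong[of E u w "[]" q] by simp
lemma congC: "raag_eq E u w \<Longrightarrow> raag_eq E (x # u) (x # w)"
  using cong[of E u w "[x]" "[]"] by simp
lemma cong2: "raag_eq E u w \<Longrightarrow> raag_eq E u' w' \<Longrightarrow> raag_eq E (u @ u') (w @ w')"
  by (meson congL congR raag_eq.trans)

lemma cancel0: "raag_eq E (x # inv_letter x # w) w"
  using raag_eq.cancel[of E "[]" x w] by simp

fun red :: "'v word \<Rightarrow> 'v word" where
  "red (x#y#w) = (if y = inv_letter x then red w else x # red (y#w))"
| "red w = w"

lemma red: "raag_eq E w (red w)"
proof (induction w rule: red.induct)
  case (1 x y w)
  show ?case
  proof (cases "y = inv_letter x")
    case True
    then show ?thesis using 1 cancel0[of E x w] raag_eq.trans by auto
  next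
    case False
    then show ?thesis using congC[OF 1(2)[OF False], of x] by simp
  qed
qed (auto intro: raag_eq.refl)

lemma red_eq: "red u = red w \<Longrightarrow> raag_eq E u w"
  by (metis red raag_eq.sym raag_eq.trans)

fun rd :: "'v word \<Rightarrow> 'v word \<Rightarrow> 'v word" where
  "rd acc [] = rev acc"
| "rd [] (x#w) = rd [x] w"
| "rd (a#acc) (x#w) = (if x = inv_letter a then rd acc w else rd (x#a#acc) w)"

lemma rd: "raag_eq E (rev acc @ w) (rd acc w)"
proof (induction acc w rule: rd.induct)
  case (1 acc) then show ?case by (simp add: raag_eq.refl)
next
  case (2 x w) then show ?case by simp
next
  case (3 a acc x w)
  show ?case
  proof (cases "x = inv_letter a")
    case True
    have "raag_eq E (rev acc @ [a, inv_letter a] @ w) (rev acc @ w)" by (rule raag_eq.cancel)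
    then show ?thesis using 3(1)[OF True] True raag_eq.trans by fastforce
  next
    case False
    then show ?thesis using 3(2)[OF False] by simp
  qed
qed

lemma rd_eq: "rd [] u = rd [] w \<Longrightarrow> raag_eq E u w"
  by (metis rd[of E "[]"] rev.simps(1) append.simps(1) raag_eq.sym raag_eq.trans)

lemma inv_cancel_r: "raag_eq E (w @ inv_word w) []"
proof (induction w)
  case Nil then show ?case by (simp add: raag_eq.refl)
next
  case (Cons x w)
  have "raag_eq E (x # (w @ inv_word w) @ [inv_letter x]) (x # [] @ [inv_letter x])"
    using cong[OF Cons, of "[x]" "[inv_letter x]"] by simp
  also have "raag_eq E (x # [] @ [inv_letter x]) []" using cancel0[of E x "[]"] by simp
  finally show ?case by simp
qed

lemma inv_cancel_l: "raag_eq E (inv_word w @ w) []"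
  using inv_cancel_r[of E "inv_word w"] by simp

lemma comm_inv: assumes "raag_eq E (p@q) (q@p)" shows "raag_eq E (inv_word p @ q) (q @ inv_word p)"
proof -
  have "raag_eq E (inv_word p @ q) (inv_word p @ q @ p @ inv_word p)"
    using cong[OF raag_eq.sym[OF inv_cancel_r[of E p]], of "inv_word p @ q" "[]"] by simp
  also have "raag_eq E (inv_word p @ q @ p @ inv_word p) (inv_word p @ p @ q @ inv_word p)"
    using cong[OF raag_eq.sym[OF assms], of "inv_word p" "inv_word p"] by simp
  also have "raag_eq E (inv_word p @ p @ q @ inv_word p) (q @ inv_word p)"
    using cong[OF inv_cancel_l[of E p], of "[]" "q @ inv_word p"] by simp
  finally show ?thesis .
qed

lemma inv_resp: assumes "\<forall>u v. E u v \<longrightarrow> E v u"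
  shows "raag_eq E u w \<Longrightarrow> raag_eq E (inv_word u) (inv_word w)"
proof (induction rule: raag_eq.induct)
  case (refl w) then show ?case by (rule raag_eq.refl)
next
  case (sym u w) then show ?case by (blast intro: raag_eq.sym)
next
  case (trans u w z) then show ?case using raag_eq.trans by blast
next
  case (cancel u x w) then show ?case
    using raag_eq.cancel[of E "inv_word w" "x" "inv_word u"] by simp
next
  case (comm x y u w) then show ?case
    using raag_eq.comm[of E "inv_letter y" "inv_letter x" "inv_word w" "inv_word u"] assms
    by (simp add: inv_letter_def)
qed

lemma comm_sym: "raag_eq E (p@q) (q@p) \<Longrightarrow> raag_eq E (q@p) (p@q)"
  by (rule raag_eq.sym)

lemma ext_simps[simp]: "ext f [] = []" "ext f (x#w) = (if snd x then inv_word (f (fst x)) else f (fst x)) @ ext f w"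
  "ext f (u @ w) = ext f u @ ext f w"
  by (auto simp: ext_def)

lemma ext_gen[simp]: "ext f (gen v) = f v" by (simp add: gen_def)

lemma ext_inv: "ext f (inv_word w) = inv_word (ext f w)"
  by (induction w) (auto simp: inv_letter_def)

definition img :: "('v \<Rightarrow> 'v word) \<Rightarrow> 'v \<times> bool \<Rightarrow> 'v word" where
  "img f x = (if snd x then inv_word (f (fst x)) else f (fst x))"

lemma img_comm: assumes sy: "\<forall>u v. E u v \<longrightarrow> E v u" and "is_endo E f" and "E (fst x) (fst y)"
  shows "raag_eq E (img f x @ img f y) (img f y @ img f x)"
proof -
  have c: "raag_eq E (f (fst x) @ f (fst y)) (f (fst y) @ f (fst x))"
    using assms by (simp add: is_endo_def)
  have c1: "raag_eq E (inv_word (f (fst x)) @ f (fst y)) (f (fst y) @ inv_word (f (fst x)))"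
    by (rule comm_inv[OF c])
  have c2: "raag_eq E (inv_word (f (fst y)) @ f (fst x)) (f (fst x) @ inv_word (f (fst y)))"
    by (rule comm_inv[OF raag_eq.sym[OF c]])
  have c3: "raag_eq E (inv_word (f (fst y)) @ inv_word (f (fst x))) (inv_word (f (fst x)) @ inv_word (f (fst y)))"
    using inv_resp[OF sy c] by simp
  show ?thesis unfolding img_def
    using c c1 c2 c3 raag_eq.sym by (auto)
qed

lemma ext_img: "ext f (x # w) = img f x @ ext f w" by (simp add: img_def)

lemma ext_resp: assumes sy: "\<forall>u v. E u v \<longrightarrow> E v u" and en: "is_endo E f"
  shows "raag_eq E u w \<Longrightarrow> raag_eq E (ext f u) (ext f w)"
proof (induction rule: raag_eq.induct)
  case (refl w) then show ?case by (rule raag_eq.refl)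
next
  case (sym u w) then show ?case by (blast intro: raag_eq.sym)
next
  case (trans u w z) then show ?case using raag_eq.trans by blast
next
  case (cancel u x w)
  have "raag_eq E (img f x @ img f (inv_letter x)) []"
    using inv_cancel_r[of E "f (fst x)"] inv_cancel_l[of E "f (fst x)"]
    by (auto simp: img_def inv_letter_def)
  then show ?case using cong[of E "img f x @ img f (inv_letter x)" "[]" "ext f u" "ext f w"] by (simp del: ext_simps(2) add: ext_img)
next
  case (comm x y u w)
  then show ?case using cong[OF img_comm[OF sy en comm], of "ext f u" "ext f w"]
    by (simp del: ext_simps(2) add: ext_img)
qed




lemma endo_comp: assumes sy: "\<forall>u v. E u v \<longrightarrow> E v u" and "is_endo E f" "is_endo E g"
  shows "is_endo E (comp f g)"
  unfolding is_endo_def comp_def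
proof (intro allI impI)
  fix u v assume "E u v"
  then have "raag_eq E (g u @ g v) (g v @ g u)" using assms by (simp add: is_endo_def)
  from ext_resp[OF sy assms(2) this] show "raag_eq E (ext f (g u) @ ext f (g v)) (ext f (g v) @ ext f (g u))"
    by simp
qed

lemma endo_eq: assumes "is_endo E f" "\<forall>v. raag_eq E (f v) (g v)" shows "is_endo E g"
  unfolding is_endo_def
proof (intro allI impI)
  fix u v assume "E u v"
  then have "raag_eq E (f u @ f v) (f v @ f u)" using assms by (simp add: is_endo_def)
  moreover have "raag_eq E (g u @ g v) (f u @ f v)" using assms(2) cong2 raag_eq.sym by blast
  moreover have "raag_eq E (f v @ f u) (g v @ g u)" using assms(2) cong2 by blast
  ultimately show "raag_eq E (g u @ g v) (g v @ g u)" using raag_eq.trans by blast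
qed

lemma endo_inner: "is_endo E (inner c)"
  unfolding is_endo_def inner_def
proof (intro allI impI)
  fix u v assume e: "E u v"
  have "raag_eq E (c @ gen u @ (inv_word c @ c) @ gen v @ inv_word c) (c @ gen u @ [] @ gen v @ inv_word c)"
    using cong[OF inv_cancel_l[of E c], of "c @ gen u" "gen v @ inv_word c"] by simp
  also have "raag_eq E (c @ gen u @ [] @ gen v @ inv_word c) (c @ gen v @ [] @ gen u @ inv_word c)"
    using raag_eq.comm[of E "(u,False)" "(v,False)" c "inv_word c"] e by (simp add: gen_def)
  also have "raag_eq E (c @ gen v @ [] @ gen u @ inv_word c) (c @ gen v @ (inv_word c @ c) @ gen u @ inv_word c)"
    using cong[OF raag_eq.sym[OF inv_cancel_l[of E c]], of "c @ gen v" "gen u @ inv_word c"] by simp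
  finally show "raag_eq E ((c @ gen u @ inv_word c) @ c @ gen v @ inv_word c) ((c @ gen v @ inv_word c) @ c @ gen u @ inv_word c)"
    by simp
qed

lemma commw: "E (fst x) (fst y) \<Longrightarrow> raag_eq E (p @ x # y # q) (p @ y # x # q)"
  using raag_eq.comm[of E x y p q] by simp

lemma commN: "E (fst x) (fst y) \<Longrightarrow> u = p @ x # y # q \<Longrightarrow> w = p @ y # x # q \<Longrightarrow> raag_eq E u w"
  using commw by blast

lemma endo_laurence: assumes sy: "\<forall>u v. E u v \<longrightarrow> E v u" and irr: "\<forall>v. \<not> E v v"
  and "laurence E f" shows "is_endo E f"
  using assms(3) unfolding laurence_def
proof (elim disjE exE conjE)
  fix v assume f: "f = inversion v"
  show ?thesis unfolding is_endo_def f inversion_def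
  proof (intro allI impI)
    fix u w assume "E u w"
    then show "raag_eq E ((if u = v then [(v, True)] else gen u) @ (if w = v then [(v, True)] else gen w))
               ((if w = v then [(v, True)] else gen w) @ (if u = v then [(v, True)] else gen u))"
      using commw[of E _ _ "[]" "[]"] irr by (auto simp: gen_def)
  qed
next
  fix v w assume vw: "v \<noteq> w" and lk: "lk E v \<subseteq> st E w" and f: "f = transvection v w"
  show ?thesis unfolding is_endo_def f transvection_def
  proof (intro allI impI)
    fix a b assume e: "E a b"
    show "raag_eq E ((if a = v then [(v, False), (w, False)] else gen a) @ (if b = v then [(v, False), (w, False)] else gen b))
               ((if b = v then [(v, False), (w, False)] else gen b) @ (if a = v then [(v, False), (w, False)] else gen a))"
    proof (cases "a = v")
      case True
      then have bv: "b \<noteq> v" using e irr by auto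
      have "b \<in> st E w" using lk e True by (auto simp: lk_def)
      then have bw: "b = w \<or> E w b" by (auto simp: st_def lk_def)
      have "raag_eq E [(v, False), (w, False), (b, False)] [(v, False), (b, False), (w, False)]"
        using bw
      proof
        assume "b = w" then show ?thesis by (simp add: raag_eq.refl)
      next
        assume "E w b" then show ?thesis by (intro commN[of _ _ _ _ "[(v,False)]"]) auto
      qed
      also have "raag_eq E [(v, False), (b, False), (w, False)] [(b, False), (v, False), (w, False)]"
        using e True by (intro commN[of _ _ _ _ "[]"]) auto
      finally show ?thesis using True bv by (simp add: gen_def)
    next
      case False
      show ?thesis
      proof (cases "b = v")
        case True
        have "a \<in> st E w" using lk e True sy by (auto simp: lk_def)
        then have aw: "a = w \<or> E a w" using sy by (auto simp: st_def lk_def)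
        have "raag_eq E [(a, False), (v, False), (w, False)] [(v, False), (a, False), (w, False)]"
          using e True by (intro commN[of _ _ _ _ "[]"]) auto
        also have "raag_eq E [(v, False), (a, False), (w, False)] [(v, False), (w, False), (a, False)]"
          using aw
        proof
          assume "a = w" then show ?thesis by (simp add: raag_eq.refl)
        next
          assume "E a w" then show ?thesis by (intro commN[of _ _ _ _ "[(v,False)]"]) auto
        qed
        finally show ?thesis using True False by (simp add: gen_def)
      next
        case F2: False
        show ?thesis using False F2 commw[of E "(a,False)" "(b,False)" "[]" "[]"] e by (simp add: gen_def)
      qed
    qed
  qed
next
  fix v K assume uc: "union_of_components E v K" and f: "f = partial_conj v K"
  have key: "raag_eq E ([(v, False), (a, False), (v, True)] @ gen b) (gen b @ [(v, False), (a, False), (v, True)])"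
    if "a \<in> K" "b \<notin> K" "E a b" for a b
  proof -
    have "b \<in> st E v" using uc that unfolding union_of_components_def by blast
    moreover have "b \<noteq> v" using uc that sy unfolding union_of_components_def st_def lk_def by blast
    ultimately have vb: "E v b" by (auto simp: st_def lk_def)
    have "raag_eq E [(v, False), (a, False), (v, True), (b, False)] [(v, False), (a, False), (b, False), (v, True)]"
      using vb by (intro commN[of _ _ _ _ "[(v, False), (a, False)]"]) auto
    also have "raag_eq E [(v, False), (a, False), (b, False), (v, True)] [(v, False), (b, False), (a, False), (v, True)]"
      using that by (intro commN[of _ _ _ _ "[(v, False)]"]) auto
    also have "raag_eq E [(v, False), (b, False), (a, False), (v, True)] [(b, False), (v, False), (a, False), (v, True)]"
      using vb by (intro commN[of _ _ _ _ "[]"]) auto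
    finally show ?thesis by (simp add: gen_def)
  qed
  show ?thesis unfolding is_endo_def f partial_conj_def
  proof (intro allI impI)
    fix a b assume e: "E a b"
    show "raag_eq E ((if a \<in> K then [(v, False), (a, False), (v, True)] else gen a) @ (if b \<in> K then [(v, False), (b, False), (v, True)] else gen b))
               ((if b \<in> K then [(v, False), (b, False), (v, True)] else gen b) @ (if a \<in> K then [(v, False), (a, False), (v, True)] else gen a))"
    proof (cases "a \<in> K"; cases "b \<in> K")
      assume "a \<in> K" "b \<in> K"
      have "raag_eq E ([(v, False), (a, False), (v, True), (v, False), (b, False), (v, True)]) [(v, False), (a, False), (b, False), (v, True)]"
        by (rule rd_eq) (simp add: inv_letter_def)
      also have "raag_eq E [(v, False), (a, False), (b, False), (v, True)] [(v, False), (b, False), (a, False), (v, True)]"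
        using e by (intro commN[of _ _ _ _ "[(v, False)]"]) auto
      also have "raag_eq E [(v, False), (b, False), (a, False), (v, True)] ([(v, False), (b, False), (v, True), (v, False), (a, False), (v, True)])"
        by (rule rd_eq) (simp add: inv_letter_def)
      finally show ?thesis using \<open>a \<in> K\<close> \<open>b \<in> K\<close> by simp
    next
      assume "a \<in> K" "b \<notin> K" then show ?thesis using key[of a b] e by simp
    next
      assume "a \<notin> K" "b \<in> K" then show ?thesis using key[of b a] e sy raag_eq.sym by fastforce
    next
      assume "a \<notin> K" "b \<notin> K" then show ?thesis using e commw[of E "(a,False)" "(b,False)" "[]" "[]"] by (simp add: gen_def)
    qed
  qed
qed

lemma endo_out0: assumes sy: "\<forall>u v. E u v \<longrightarrow> E v u" and irr: "\<forall>v. \<not> E v v"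
  shows "f \<in> out0 E \<Longrightarrow> is_endo E f"
proof (induction rule: out0.induct)
  case (gen f) then show ?case using endo_laurence[OF sy irr] by blast
next
  case (inn c) then show ?case by (rule endo_inner)
next
  case (comp f g) then show ?case using endo_comp[OF sy] by blast
next
  case (inv f g) then show ?case by (simp add: inverse_auts_def)
next
  case (eq f g) then show ?case using endo_eq by blast
qed




definition sg :: "'v \<times> bool \<Rightarrow> int" where "sg x = (if snd x then -1 else 1)"

definition ab :: "'v word \<Rightarrow> 'v \<Rightarrow> int" where
  "ab w u = sum_list (map (\<lambda>x. if fst x = u then sg x else 0) w)"

lemma ab_simps[simp]: "ab [] u = 0" "ab (x#w) u = (if fst x = u then sg x else 0) + ab w u"
  "ab (w1 @ w2) u = ab w1 u + ab w2 u"
  by (auto simp: ab_def)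

lemma ab_inv[simp]: "ab (inv_word w) u = - ab w u"
  by (induction w) (auto simp: sg_def inv_letter_def)

lemma ab_resp: "raag_eq E u w \<Longrightarrow> ab u = ab w"
  by (induction rule: raag_eq.induct) (auto simp: sg_def inv_letter_def fun_eq_iff)

lemma ab_nz: "ab w u \<noteq> 0 \<Longrightarrow> u \<in> set (map fst w)"
  by (induction w) (auto split: if_splits)

lemma ab_gen[simp]: "ab (gen x) u = (if x = u then 1 else 0)"
  by (simp add: gen_def sg_def)

lemma ab_ext: "ab (ext f w) u = (\<Sum>x\<in>(UNIV::'v::finite set). ab w x * ab (f x) u)"
proof (induction w)
  case Nil then show ?case by simp
next
  case (Cons y w)
  have "ab (ext f (y # w)) u = ab (img f y) u + ab (ext f w) u" by (simp del: ext_simps(2) add: ext_img)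
  also have "ab (img f y) u = (\<Sum>x\<in>(UNIV::'v set). (if fst y = x then sg y else 0) * ab (f x) u)"
    by (simp add: img_def sg_def if_distrib[where f="\<lambda>z. z * _"] cong: if_cong)
  finally show ?case using Cons by (simp add: distrib_right sum.distrib)
qed

definition A :: "('v \<Rightarrow> 'v word) \<Rightarrow> 'v \<Rightarrow> 'v \<Rightarrow> int" where "A f u v = ab (f v) u"
definition mm :: "('v::finite \<Rightarrow> 'v \<Rightarrow> int) \<Rightarrow> ('v \<Rightarrow> 'v \<Rightarrow> int) \<Rightarrow> 'v \<Rightarrow> 'v \<Rightarrow> int" where
  "mm P Q u v = (\<Sum>x\<in>UNIV. P u x * Q x v)"
definition Idm :: "'v \<Rightarrow> 'v \<Rightarrow> int" where "Idm u v = (if u = v then 1 else 0)"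

lemma A_comp: "A (comp f g) = mm (A f) (A (g::'v::finite \<Rightarrow> 'v word))"
  by (auto simp: fun_eq_iff A_def mm_def comp_def ab_ext mult.commute)

lemma mm_assoc: "mm (mm P Q) R = mm P (mm Q R)"
  by (auto simp: fun_eq_iff mm_def sum_distrib_left sum_distrib_right mult.assoc intro: sum.swap)

lemma mm_Id[simp]: "mm Idm P = P" "mm P Idm = P"
  by (auto simp: fun_eq_iff mm_def Idm_def if_distrib[where f="\<lambda>z. z * _"] if_distrib[where f="\<lambda>z. _ * z"] cong: if_cong)

lemma A_gen: "(\<forall>v. raag_eq E (f v) (gen v)) \<Longrightarrow> A f = Idm"
proof -
  assume h: "\<forall>v. raag_eq E (f v) (gen v)"
  have "ab (f v) = ab (gen v)" for v using h ab_resp by blast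
  then show ?thesis by (auto simp: fun_eq_iff A_def Idm_def)
qed

definition triM :: "('v \<Rightarrow> 'v \<Rightarrow> bool) \<Rightarrow> ('v \<Rightarrow> 'v \<Rightarrow> int) \<Rightarrow> bool" where
  "triM E M \<longleftrightarrow> (\<forall>u v. M u v \<noteq> 0 \<longrightarrow> lk E v \<subseteq> st E u)"

lemma dom_trans: assumes sy: "\<forall>u v. E u v \<longrightarrow> E v u"
  and "lk E a \<subseteq> st E b" "lk E b \<subseteq> st E c" shows "lk E a \<subseteq> st E c"
  using assms unfolding lk_def st_def by blast

lemma triM_Id: "triM E Idm" by (auto simp: triM_def Idm_def st_def)

lemma triM_mm: assumes sy: "\<forall>u v. E u v \<longrightarrow> E v u" and "triM E P" "triM E Q" shows "triM E (mm P Q)"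
  unfolding triM_def
proof (intro allI impI)
  fix u v assume "mm P Q u v \<noteq> 0"
  then obtain x where "P u x * Q x v \<noteq> 0" unfolding mm_def by (meson sum.neutral)
  then show "lk E v \<subseteq> st E u" using assms dom_trans[OF sy] unfolding triM_def by (metis mult_eq_0_iff)
qed

definition Pinv where
  "Pinv E f \<longleftrightarrow> triM E (A f) \<and> (\<exists>N. triM E N \<and> mm (A f) N = Idm \<and> mm N (A f) = Idm)"

lemma Pinv_Id: "A f = Idm \<Longrightarrow> Pinv E f"
  unfolding Pinv_def by (auto intro!: triM_Id exI[of _ Idm])




lemma mm_addL: "mm (\<lambda>u x. P u x + Q u x) R = (\<lambda>u x. mm P R u x + mm Q R u x)"
  by (simp add: fun_eq_iff mm_def distrib_right sum.distrib)
lemma mm_addR: "mm R (\<lambda>u x. P u x + Q u x) = (\<lambda>u x. mm R P u x + mm R Q u x)"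
  by (simp add: fun_eq_iff mm_def distrib_left sum.distrib)
lemma mm_subL: "mm (\<lambda>u x. P u x - Q u x) R = (\<lambda>u x. mm P R u x - mm Q R u x)"
  by (simp add: fun_eq_iff mm_def left_diff_distrib sum_subtractf)
lemma mm_subR: "mm R (\<lambda>u x. P u x - Q u x) = (\<lambda>u x. mm R P u x - mm R Q u x)"
  by (simp add: fun_eq_iff mm_def right_diff_distrib sum_subtractf)
lemma mm_eL: "mm (\<lambda>u x. if u = w \<and> x = v then 1 else 0) R = (\<lambda>u x. if u = w then R v x else 0)"
proof -
  have "(\<Sum>y\<in>UNIV. (if u = w \<and> y = v then 1 else 0) * R y x) = (if u = w then R v x else 0)" for u x :: 'a
    by (cases "u = w") (simp_all add: if_distrib[where f="\<lambda>z. z * _"] cong: if_cong)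
  then show ?thesis by (simp add: fun_eq_iff mm_def)
qed
lemma mm_diagL: "mm (\<lambda>u y. if u = y then d u else 0) Q = (\<lambda>u x. d u * Q u x)"
proof -
  have "(\<Sum>y\<in>UNIV. (if u = y then d u else 0) * Q y x) = d u * Q u x" for u x :: 'a
    by (simp add: if_distrib[where f="\<lambda>z. z * _"] cong: if_cong)
  then show ?thesis by (simp add: fun_eq_iff mm_def)
qed

lemma Pinv_laurence: assumes sy: "\<forall>u v. E u v \<longrightarrow> E v u"
  and "laurence E (f :: 'v::finite \<Rightarrow> 'v word)" shows "Pinv E f"
  using assms(2) unfolding laurence_def
proof (elim disjE exE conjE)
  fix v assume f: "f = inversion v"
  define M :: "'v \<Rightarrow> 'v \<Rightarrow> int" where "M = (\<lambda>u x. if u = x then (if u = v then -1 else 1) else 0)"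
  have AM: "A f = M" by (auto simp: fun_eq_iff A_def M_def f inversion_def sg_def)
  have MM: "mm M M = Idm"
    unfolding M_def mm_diagL by (auto simp: fun_eq_iff Idm_def)
  have tM: "triM E M" by (auto simp: triM_def M_def st_def)
  show ?thesis unfolding Pinv_def AM using MM tM by blast
next
  fix v w assume vw: "v \<noteq> w" and lk: "lk E v \<subseteq> st E w" and f: "f = transvection v w"
  define M :: "'v \<Rightarrow> 'v \<Rightarrow> int" where "M = (\<lambda>u x. Idm u x + (if u = w \<and> x = v then 1 else 0))"
  define N :: "'v \<Rightarrow> 'v \<Rightarrow> int" where "N = (\<lambda>u x. Idm u x - (if u = w \<and> x = v then 1 else 0))"
  have AM: "A f = M" using vw by (auto simp: fun_eq_iff A_def M_def f transvection_def sg_def Idm_def)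
  have ee: "mm (\<lambda>u x. if u = w \<and> x = v then 1 else 0) (\<lambda>u x. if u = w \<and> x = v then 1 else 0) = (\<lambda>u x. 0)"
    using vw by (simp add: mm_eL fun_eq_iff)
  have MN: "mm M N = Idm" "mm N M = Idm" unfolding M_def N_def
    by (simp_all add: mm_addL mm_addR mm_subL mm_subR ee fun_eq_iff)
  have tM: "triM E M" "triM E N" using lk by (auto simp: triM_def M_def N_def Idm_def st_def)
  show ?thesis unfolding Pinv_def AM using MN tM by blast
next
  fix v K assume f: "f = partial_conj v K"
  have "A f = Idm" by (auto simp: fun_eq_iff A_def f partial_conj_def sg_def Idm_def)
  then show ?thesis by (rule Pinv_Id)
qed

lemma Pinv_out0: assumes sy: "\<forall>u v. E u v \<longrightarrow> E v u"
  shows "(f :: 'v::finite \<Rightarrow> 'v word) \<in> out0 E \<Longrightarrow> Pinv E f"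
proof (induction rule: out0.induct)
  case (gen f) then show ?case using Pinv_laurence[OF sy] by blast
next
  case (inn c)
  have "A (inner c) = Idm" by (auto simp: fun_eq_iff A_def inner_def Idm_def)
  then show ?case by (rule Pinv_Id)
next
  case (comp f g)
  then obtain Nf Ng where "triM E (A f)" "triM E Nf" "mm (A f) Nf = Idm" "mm Nf (A f) = Idm"
    "triM E (A g)" "triM E Ng" "mm (A g) Ng = Idm" "mm Ng (A g) = Idm" unfolding Pinv_def by blast
  note h = this
  have 1: "mm (mm (A f) (A g)) (mm Ng Nf) = Idm"
  proof -
    have "mm (mm (A f) (A g)) (mm Ng Nf) = mm (A f) (mm (mm (A g) Ng) Nf)" by (simp add: mm_assoc)
    then show ?thesis using h by simp
  qed
  have 2: "mm (mm Ng Nf) (mm (A f) (A g)) = Idm"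
  proof -
    have "mm (mm Ng Nf) (mm (A f) (A g)) = mm Ng (mm (mm Nf (A f)) (A g))" by (simp add: mm_assoc)
    then show ?thesis using h by simp
  qed
  have "triM E (mm (A f) (A g))" "triM E (mm Ng Nf)" using h triM_mm[OF sy] by auto
  then show ?case unfolding Pinv_def A_comp using 1 2 by blast
next
  case (inv f g)
  then obtain N where N: "triM E N" "mm (A f) N = Idm" "mm N (A f) = Idm" unfolding Pinv_def by blast
  have fg: "mm (A f) (A g) = Idm" "mm (A g) (A f) = Idm"
  proof -
    have "A (comp f g) = Idm" "A (comp g f) = Idm"
      using inv(2) A_gen[of E "comp f g"] A_gen[of E "comp g f"] unfolding inverse_auts_def by blast+
    then show "mm (A f) (A g) = Idm" "mm (A g) (A f) = Idm" by (simp_all only: A_comp)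
  qed
  have "A g = mm (mm N (A f)) (A g)" using N by simp
  also have "\<dots> = mm N (mm (A f) (A g))" by (simp only: mm_assoc)
  also have "\<dots> = N" using fg by simp
  finally have "A g = N" .
  moreover have "triM E (A f)" using inv.IH unfolding Pinv_def by blast
  ultimately show ?case unfolding Pinv_def using N fg by (intro conjI exI[of _ "A f"]) auto
next
  case (eq f g)
  have "ab (g v) = ab (f v)" for v using ab_resp[of E "f v" "g v"] eq.hyps(2) by simp
  then have "A g = A f" by (simp add: fun_eq_iff A_def)
  then show ?case using eq.IH unfolding Pinv_def by simp
qed




lemma swap_out0: assumes sy: "\<forall>u v. E u v \<longrightarrow> E v u" and irr: "\<forall>v. \<not> E v v"
  and ab: "a \<noteq> b" and lab: "lk E a \<subseteq> st E b" and lba: "lk E b \<subseteq> st E a"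
  shows "perm_aut (transpose a b) \<in> out0 E"
proof -
  define K where "K = UNIV - st E a - {b}"
  have uc: "union_of_components E a K"
    unfolding union_of_components_def K_def using lba sy by (auto simp: st_def lk_def)
  define m1 where "m1 = transvection a b"
  define m2 where "m2 = comp (inversion a) (comp (transvection b a) (inversion a))"
  define m4 where "m4 = inversion b"
  define F where "F = comp (partial_conj a K) (comp (inner [(a,True)]) (comp m1 (comp m2 (comp m1 m4))))"
  have t1: "m1 \<in> out0 E" unfolding m1_def using ab lab by (intro out0.gen) (auto simp: laurence_def)
  have l1: "laurence E (transvection b a)" unfolding laurence_def
    using ab lba by (intro disjI2 disjI1 exI[of _ b] exI[of _ a]) auto
  have l2: "laurence E (inversion a)" unfolding laurence_def by blast
  have t2: "m2 \<in> out0 E" unfolding m2_def using l1 l2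
    by (intro out0.comp out0.gen)
  have t4: "m4 \<in> out0 E" unfolding m4_def by (intro out0.gen) (auto simp: laurence_def)
  have l3: "laurence E (partial_conj a K)" unfolding laurence_def
    using uc by (intro disjI2 exI[of _ a] exI[of _ K]) auto
  have tF: "F \<in> out0 E" unfolding F_def
    by (rule out0.comp[OF out0.gen[OF l3] out0.comp[OF out0.inn out0.comp[OF t1 out0.comp[OF t2 out0.comp[OF t1 t4]]]]])
  have aK: "a \<notin> K" "b \<notin> K" by (auto simp: K_def st_def)
  have "raag_eq E (F x) (perm_aut (transpose a b) x)" for x
  proof -
    consider "x = a" | "x = b" | "x \<in> K" | "x \<noteq> a" "x \<noteq> b" "E a x"
      by (auto simp: K_def st_def lk_def)
    then show ?thesis
    proof cases
      case 1
      then show ?thesis using ab aK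
        by (intro rd_eq) (simp add: F_def m1_def m2_def m4_def comp_def inner_def transvection_def inversion_def
            partial_conj_def gen_def inv_letter_def perm_aut_def)
    next
      case 2
      then show ?thesis using ab aK
        by (intro rd_eq) (simp add: F_def m1_def m2_def m4_def comp_def inner_def transvection_def inversion_def
            partial_conj_def gen_def inv_letter_def perm_aut_def)
    next
      case 3
      then have "x \<noteq> a" "x \<noteq> b" using aK by auto
      then show ?thesis using ab aK 3
        by (intro rd_eq) (simp add: F_def m1_def m2_def m4_def comp_def inner_def transvection_def inversion_def
            partial_conj_def gen_def inv_letter_def perm_aut_def transpose_def)
    next
      case 4
      then have xK: "x \<notin> K" by (auto simp: K_def st_def lk_def)
      have "F x = [(a,True),(x,False),(a,False)]" using 4 ab aK xK
        by (simp add: F_def m1_def m2_def m4_def comp_def inner_def transvection_def inversion_def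
            partial_conj_def gen_def inv_letter_def)
      moreover have "raag_eq E [(a,True),(x,False),(a,False)] [(x,False),(a,True),(a,False)]"
        using 4 by (intro commN[of _ _ _ _ "[]"]) auto
      moreover have "raag_eq E [(x,False),(a,True),(a,False)] (perm_aut (transpose a b) x)"
        using 4 by (intro rd_eq) (simp add: perm_aut_def transpose_def gen_def inv_letter_def)
      ultimately show ?thesis using raag_eq.trans by metis
    qed
  qed
  then show ?thesis using out0.eq[OF tF] by blast
qed




definition LL :: "('v \<Rightarrow> 'v \<Rightarrow> bool) \<Rightarrow> 'v \<Rightarrow> 'v \<Rightarrow> bool" where
  "LL E x y \<longleftrightarrow> lk E x \<subseteq> st E y \<and> lk E y \<subseteq> st E x"

lemma LL_refl: "LL E x x" by (auto simp: LL_def st_def)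
lemma LL_sym: "LL E x y \<Longrightarrow> LL E y x" by (auto simp: LL_def)
lemma LL_trans: "\<forall>u v. E u v \<longrightarrow> E v u \<Longrightarrow> LL E x y \<Longrightarrow> LL E y z \<Longrightarrow> LL E x z"
  unfolding LL_def using dom_trans by metis

lemma ext_perm: "ext (perm_aut \<sigma>) w = map (\<lambda>x. (\<sigma> (fst x), snd x)) w"
  by (induction w) (auto simp: perm_aut_def gen_def inv_letter_def)

lemma perm_comp: "perm_aut (\<tau> \<circ> \<sigma>) = comp (perm_aut \<tau>) (perm_aut \<sigma>)"
  by (simp add: fun_eq_iff comp_def perm_aut_def gen_def)

lemma perm_out0_aux:
  assumes sy: "\<forall>u v. E u v \<longrightarrow> E v u" and irr: "\<forall>v. \<not> E v v"
  and swap: "\<And>a b. a \<noteq> b \<Longrightarrow> LL E a b \<Longrightarrow> perm_aut (transpose a b) \<in> out0 E"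
  shows "card {x. \<sigma> x \<noteq> x} = n \<Longrightarrow> inj (\<sigma>::'v::finite \<Rightarrow> 'v) \<Longrightarrow> (\<forall>v. LL E v (\<sigma> v)) \<Longrightarrow> perm_aut \<sigma> \<in> out0 E"
proof (induction n arbitrary: \<sigma> rule: less_induct)
  case (less n)
  show ?case
  proof (cases "\<exists>v. \<sigma> v \<noteq> v")
    case False
    then have "perm_aut \<sigma> = inner []" by (auto simp: fun_eq_iff perm_aut_def inner_def)
    then show ?thesis using out0.inn by metis
  next
    case True
    then obtain v where v: "\<sigma> v \<noteq> v" by blast
    define \<tau> where "\<tau> = transpose v (\<sigma> v)"
    define \<sigma>' where "\<sigma>' = \<tau> \<circ> \<sigma>"
    have s: "\<sigma> = \<tau> \<circ> \<sigma>'" by (simp add: \<sigma>'_def \<tau>_def fun_eq_iff)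
    have Lt: "LL E y (\<tau> y)" for y
      using less.prems(3) LL_refl LL_sym[of E v "\<sigma> v"] unfolding \<tau>_def transpose_def by (auto)
    have L': "\<forall>y. LL E y (\<sigma>' y)" unfolding \<sigma>'_def
      using less.prems(3) Lt LL_trans[OF sy] by (metis o_apply)
    have inj': "inj \<sigma>'" unfolding \<sigma>'_def using less.prems(2) inj_transpose inj_compose \<tau>_def by metis
    have sub: "{x. \<sigma>' x \<noteq> x} \<subseteq> {x. \<sigma> x \<noteq> x} - {v}"
    proof
      fix x assume "x \<in> {x. \<sigma>' x \<noteq> x}"
      then have h: "\<tau> (\<sigma> x) \<noteq> x" by (simp add: \<sigma>'_def)
      show "x \<in> {x. \<sigma> x \<noteq> x} - {v}"
      proof (cases "\<sigma> x = x")
        case True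
        then have "x \<noteq> v" using v by auto
        moreover have "x \<noteq> \<sigma> v" using True \<open>x \<noteq> v\<close> less.prems(2) by (metis injD)
        ultimately show ?thesis using h True by (simp add: \<tau>_def)
      next
        case False
        moreover have "x \<noteq> v" using h by (auto simp: \<tau>_def)
        ultimately show ?thesis by simp
      qed
    qed
    have "card {x. \<sigma>' x \<noteq> x} < n"
    proof -
      have "card {x. \<sigma>' x \<noteq> x} \<le> card ({x. \<sigma> x \<noteq> x} - {v})" by (rule card_mono[OF _ sub]) simp
      also have "\<dots> < card {x. \<sigma> x \<noteq> x}" using v by (intro card_Diff1_less) auto
      finally show ?thesis using less.prems(1) by simp
    qed
    then have "perm_aut \<sigma>' \<in> out0 E" using less.IH inj' L' by blast
    moreover have "perm_aut \<tau> \<in> out0 E" unfolding \<tau>_def using swap v less.prems(3) LL_sym by metis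
    ultimately show ?thesis using s perm_comp out0.comp by metis
  qed
qed

lemma orbit: fixes \<sigma> :: "'v::finite \<Rightarrow> 'v"
  assumes inj: "inj \<sigma>" and refl: "\<And>x. R x x" and tr: "\<And>x y z. R x y \<Longrightarrow> R y z \<Longrightarrow> R x z"
    and st: "\<And>x. R x (\<sigma> x)"
  shows "R (\<sigma> v) v"
proof -
  have "\<not> inj (\<lambda>n::nat. (\<sigma> ^^ n) v)"
  proof
    assume "inj (\<lambda>n::nat. (\<sigma> ^^ n) v)"
    then have "finite (UNIV :: nat set)" using finite_imageD[of "\<lambda>n::nat. (\<sigma> ^^ n) v" UNIV] by simp
    then show False by simp
  qed
  then obtain i j :: nat where ij: "i \<noteq> j" "(\<sigma> ^^ i) v = (\<sigma> ^^ j) v" unfolding inj_def by blast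
  have gen: "(\<sigma> ^^ i) v = (\<sigma> ^^ j) v \<Longrightarrow> i < j \<Longrightarrow> \<exists>m. (\<sigma> ^^ Suc m) v = v" for i j
  proof -
    assume h: "(\<sigma> ^^ i) v = (\<sigma> ^^ j) v" "i < j"
    have "(\<sigma> ^^ i) ((\<sigma> ^^ (j - i)) v) = (\<sigma> ^^ i) v"
      using h by (simp add: funpow_add[symmetric, THEN fun_cong, simplified])
    then have "(\<sigma> ^^ (j - i)) v = v" using inj_fn[OF inj, of i] by (meson injD)
    moreover have "j - i = Suc (j - i - 1)" using h by simp
    ultimately show ?thesis by metis
  qed
  obtain m where m: "(\<sigma> ^^ Suc m) v = v"
    using ij gen by (metis linorder_neqE_nat)
  have "R (\<sigma> v) ((\<sigma> ^^ Suc k) v)" for k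
  proof (induction k)
    case 0 then show ?case using refl by simp
  next
    case (Suc k) then show ?case using tr st by (metis funpow.simps(2) o_apply)
  qed
  from this[of m] m show ?thesis by simp
qed


lemma E_step: assumes sy: "\<forall>u v. E u v \<longrightarrow> E v u"
  shows "E u v \<Longrightarrow> LL E v v' \<Longrightarrow> u \<noteq> v' \<Longrightarrow> E u v'"
  using sy unfolding LL_def lk_def st_def by blast

lemma E_pres: assumes sy: "\<forall>u v. E u v \<longrightarrow> E v u" and irr: "\<forall>v. \<not> E v v"
  and inj: "inj \<tau>" and L: "\<forall>x. LL E x (\<tau> x)" and e: "E u v"
  shows "E (\<tau> u) (\<tau> v)"
proof -
  have uv: "u \<noteq> v" using e irr by auto
  then have tuv: "\<tau> u \<noteq> \<tau> v" using inj by (meson injD)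
  show ?thesis
  proof (cases "u = \<tau> v")
    case False
    have "E u (\<tau> v)" using E_step[OF sy e L[rule_format, of v] False] .
    then have "E (\<tau> v) u" using sy by blast
    from E_step[OF sy this L[rule_format, of u]] tuv have "E (\<tau> v) (\<tau> u)" by metis
    then show ?thesis using sy by blast
  next
    case True
    show ?thesis
    proof (cases "v = \<tau> u")
      case True
      then show ?thesis using \<open>u = \<tau> v\<close> e sy by auto
    next
      case False
      have "E v u" using e sy by blast
      from E_step[OF sy this L[rule_format, of u] False] have 1: "E v (\<tau> u)" .
      have Lvu: "LL E v u" using L True unfolding LL_def by auto
      have "\<tau> u \<noteq> u" using True tuv by simp
      have "E (\<tau> u) v" using 1 sy by blast
      from E_step[OF sy this Lvu] \<open>\<tau> u \<noteq> u\<close> have "E (\<tau> u) u" by metis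
      then show ?thesis using True by simp
    qed
  qed
qed

lemma sat_stab: assumes sy: "\<forall>u v. E u v \<longrightarrow> E v u" and irr: "\<forall>v. \<not> E v v"
  and f: "inO E G H f" and D: "\<Delta> \<in> H" and v: "v \<in> \<Delta>"
  shows "stabilises E f {v}"
proof -
  from f D obtain c where c: "\<forall>w. set (map fst w) \<subseteq> \<Delta> \<longrightarrow> raag_eq E (ext (comp (inner c) f) w) w"
    unfolding inO_def acts_trivially_def by blast
  define h where "h = comp (inner c) f"
  have fo: "f \<in> out0 E" using f unfolding inO_def by blast
  have en: "is_endo E h" unfolding h_def
    by (rule endo_comp[OF sy endo_inner endo_out0[OF sy irr fo]])
  have "image_of E h (special E {v}) = special E {v}"
  proof
    show "image_of E h (special E {v}) \<subseteq> special E {v}"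
    proof
      fix w assume "w \<in> image_of E h (special E {v})"
      then obtain u u' where u: "raag_eq E (ext h u) w" "set (map fst u') \<subseteq> {v}" "raag_eq E u u'"
        unfolding image_of_def special_def by blast
      have "raag_eq E (ext h u) (ext h u')" by (rule ext_resp[OF sy en u(3)])
      moreover have "raag_eq E (ext h u') u'" using c u(2) v unfolding h_def by blast
      ultimately have "raag_eq E w u'" using raag_eq.trans[OF raag_eq.sym[OF u(1)]] raag_eq.trans by blast
      then show "w \<in> special E {v}" using u(2) unfolding special_def by blast
    qed
  next
    show "special E {v} \<subseteq> image_of E h (special E {v})"
    proof
      fix w assume "w \<in> special E {v}"
      then obtain w' where w': "set (map fst w') \<subseteq> {v}" "raag_eq E w w'" unfolding special_def by blast
      have "raag_eq E (ext h w') w'" using c w'(1) v unfolding h_def by blast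
      then have "raag_eq E (ext h w') w" using raag_eq.trans[OF _ raag_eq.sym[OF w'(2)]] by blast
      moreover have "w' \<in> special E {v}" using w'(1) raag_eq.refl unfolding special_def by blast
      ultimately show "w \<in> image_of E h (special E {v})" unfolding image_of_def by blast
    qed
  qed
  then show ?thesis unfolding stabilises_def h_def by blast
qed

lemma G_le_trans: "\<forall>u v. E u v \<longrightarrow> E v u \<Longrightarrow> G_le E G x y \<Longrightarrow> G_le E G y z \<Longrightarrow> G_le E G x z"
  unfolding G_le_def using dom_trans[of E x y z] by simp


lemma ext_inner_nil: "ext (inner []) w = w"
  by (induction w) (auto simp: inner_def gen_def inv_letter_def)

lemma comp_inner_nil: "comp (inner []) f = f"
  by (simp add: fun_eq_iff comp_def ext_inner_nil)

lemma perm_Pinv_lk: assumes sy: "\<forall>u v. E u v \<longrightarrow> E v u" and "perm_aut \<sigma> \<in> out0 E"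
  shows "lk E v \<subseteq> st E ((\<sigma>::'v::finite \<Rightarrow> 'v) v)"
proof -
  have "triM E (A (perm_aut \<sigma>))" using Pinv_out0[OF sy assms(2)] unfolding Pinv_def by blast
  moreover have "A (perm_aut \<sigma>) (\<sigma> v) v = 1" by (simp add: A_def perm_aut_def)
  ultimately show ?thesis unfolding triM_def by force
qed

lemma perm_stab_mem: assumes "stabilises E (perm_aut \<sigma>) \<Delta>" and v: "v \<in> \<Delta>"
  shows "\<sigma> v \<in> \<Delta>"
proof -
  obtain c where c: "image_of E (comp (inner c) (perm_aut \<sigma>)) (special E \<Delta>) = special E \<Delta>"
    using assms(1) unfolding stabilises_def by blast
  have "gen v \<in> special E \<Delta>" unfolding special_def
    using v raag_eq.refl[of E "gen v"] by (intro CollectI exI[of _ "gen v"]) (simp add: gen_def)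
  then have "ext (comp (inner c) (perm_aut \<sigma>)) (gen v) \<in> image_of E (comp (inner c) (perm_aut \<sigma>)) (special E \<Delta>)"
    unfolding image_of_def using raag_eq.refl by blast
  then have "ext (comp (inner c) (perm_aut \<sigma>)) (gen v) \<in> special E \<Delta>"
    using c by simp
  moreover have "ext (comp (inner c) (perm_aut \<sigma>)) (gen v) = c @ gen (\<sigma> v) @ inv_word c"
    by (simp add: comp_def perm_aut_def inner_def)
  ultimately have "c @ gen (\<sigma> v) @ inv_word c \<in> special E \<Delta>" by simp
  then obtain w' where w': "set (map fst w') \<subseteq> \<Delta>"
    "raag_eq E (c @ gen (\<sigma> v) @ inv_word c) w'"
    unfolding special_def by blast
  have "ab (c @ gen (\<sigma> v) @ inv_word c) (\<sigma> v) = 1" by simp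
  then have "ab w' (\<sigma> v) \<noteq> 0" using ab_resp[OF w'(2)] by simp
  then have "\<sigma> v \<in> set (map fst w')" by (rule ab_nz)
  then show ?thesis using w'(1) by blast
qed

theorem lemma7p7:
  fixes E :: "'v::finite \<Rightarrow> 'v \<Rightarrow> bool" and G H :: "'v set set"
  assumes "\<forall>u v. E u v \<longrightarrow> E v u"
    and "\<forall>v. \<not> E v v"
    and "saturated E G H"
  shows "{\<sigma>. graph_aut E \<sigma> \<and> inO E G H (perm_aut \<sigma>)}
       = {\<sigma>. bij \<sigma> \<and> (\<forall>v. G_equiv E G v (\<sigma> v))}"
proof
  note sy = assms(1) and irr = assms(2) and sat = assms(3)
  show "{\<sigma>. graph_aut E \<sigma> \<and> inO E G H (perm_aut \<sigma>)} \<subseteq> {\<sigma>. bij \<sigma> \<and> (\<forall>v. G_equiv E G v (\<sigma> v))}"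
  proof
    fix \<sigma> :: "'v \<Rightarrow> 'v" assume "\<sigma> \<in> {\<sigma>. graph_aut E \<sigma> \<and> inO E G H (perm_aut \<sigma>)}"
    then have ga: "graph_aut E \<sigma>" and io: "inO E G H (perm_aut \<sigma>)" by auto
    have bij: "bij \<sigma>" using ga unfolding graph_aut_def by (rule conjunct1)
    have io0: "perm_aut \<sigma> \<in> out0 E" and ioG: "\<forall>\<Delta>\<in>G. stabilises E (perm_aut \<sigma>) \<Delta>"
      using io unfolding inO_def by auto
    have le: "G_le E G x (\<sigma> x)" for x
    proof -
      have "lk E x \<subseteq> st E (\<sigma> x)" by (rule perm_Pinv_lk[OF sy io0])
      moreover have "\<forall>\<Delta>\<in>G. x \<in> \<Delta> \<longrightarrow> \<sigma> x \<in> \<Delta>"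
      proof (intro ballI impI)
        fix \<Delta> assume "\<Delta> \<in> G" "x \<in> \<Delta>"
        then show "\<sigma> x \<in> \<Delta>" using perm_stab_mem[of E \<sigma> \<Delta> x] ioG by simp
      qed
      ultimately show ?thesis unfolding G_le_def by (rule conjI)
    qed
    have rf: "G_le E G x x" for x by (auto simp: G_le_def st_def)
    have injs: "inj \<sigma>" using bij by (simp add: bij_def)
    have "G_le E G (\<sigma> v) v" for v
      by (rule orbit[of \<sigma> "G_le E G", OF injs rf G_le_trans[OF sy] le])
    then have "\<forall>v. G_equiv E G v (\<sigma> v)" using le unfolding G_equiv_def by simp
    then show "\<sigma> \<in> {\<sigma>. bij \<sigma> \<and> (\<forall>v. G_equiv E G v (\<sigma> v))}"
      using bij by simp
  qed
next
  note sy = assms(1) and irr = assms(2) and sat = assms(3)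
  show "{\<sigma>. bij \<sigma> \<and> (\<forall>v. G_equiv E G v (\<sigma> v))} \<subseteq> {\<sigma>. graph_aut E \<sigma> \<and> inO E G H (perm_aut \<sigma>)}"
  proof
    fix \<sigma> :: "'v \<Rightarrow> 'v" assume "\<sigma> \<in> {\<sigma>. bij \<sigma> \<and> (\<forall>v. G_equiv E G v (\<sigma> v))}"
    then have bij: "bij \<sigma>" and eqv: "\<forall>v. G_equiv E G v (\<sigma> v)" by auto
    have inj: "inj \<sigma>" using bij by (simp add: bij_def)
    have L: "\<forall>x. LL E x (\<sigma> x)" using eqv unfolding G_equiv_def G_le_def LL_def by blast
    have Linv: "\<forall>x. LL E x (inv \<sigma> x)"
    proof
      fix x
      have "LL E (inv \<sigma> x) (\<sigma> (inv \<sigma> x))" using L by blast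
      then show "LL E x (inv \<sigma> x)" using surj_f_inv_f[OF bij_is_surj[OF bij]] by (simp add: LL_def)
    qed
    have injinv: "inj (inv \<sigma>)" using bij_imp_bij_inv[OF bij] by (simp add: bij_def)
    have ga: "graph_aut E \<sigma>"
      unfolding graph_aut_def
    proof (intro conjI allI iffI)
      show "bij \<sigma>" by fact
    next
      fix u v assume "E u v" then show "E (\<sigma> u) (\<sigma> v)" using E_pres[OF sy irr inj L] by blast
    next
      fix u v assume "E (\<sigma> u) (\<sigma> v)"
      from E_pres[OF sy irr injinv Linv this] show "E u v" using inv_f_f[OF inj] by simp
    qed
    have out: "perm_aut \<sigma> \<in> out0 E"
    proof (rule perm_out0_aux[OF sy irr _ HOL.refl inj])
      show "\<forall>v. LL E v (\<sigma> v)" by (rule L)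
    next
      fix a b :: 'v assume "a \<noteq> b" "LL E a b"
      then show "perm_aut (transpose a b) \<in> out0 E" using swap_out0[OF sy irr] unfolding LL_def by blast
    qed
    have endo: "is_endo E (perm_aut \<sigma>)" unfolding is_endo_def perm_aut_def
    proof (intro allI impI)
      fix u v assume "E u v"
      then have "E (\<sigma> u) (\<sigma> v)" using ga unfolding graph_aut_def by blast
      then show "raag_eq E (gen (\<sigma> u) @ gen (\<sigma> v)) (gen (\<sigma> v) @ gen (\<sigma> u))"
        unfolding gen_def by (intro commN[of _ _ _ _ "[]"]) auto
    qed
    have stab: "stabilises E (perm_aut \<sigma>) \<Delta>" if D: "\<Delta> \<in> G" for \<Delta>
    proof -
      have sub: "\<sigma> ` \<Delta> \<subseteq> \<Delta>" using eqv D unfolding G_equiv_def G_le_def by blast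
      have img: "\<sigma> ` \<Delta> = \<Delta>" by (rule endo_inj_surj[OF finite sub]) (use inj in \<open>simp add: inj_on_def inj_def\<close>)
      have "image_of E (perm_aut \<sigma>) (special E \<Delta>) = special E \<Delta>"
      proof
        show "image_of E (perm_aut \<sigma>) (special E \<Delta>) \<subseteq> special E \<Delta>"
        proof
          fix w assume "w \<in> image_of E (perm_aut \<sigma>) (special E \<Delta>)"
          then obtain u u' where u: "raag_eq E (ext (perm_aut \<sigma>) u) w" "set (map fst u') \<subseteq> \<Delta>" "raag_eq E u u'"
            unfolding image_of_def special_def by blast
          have "raag_eq E (ext (perm_aut \<sigma>) u) (ext (perm_aut \<sigma>) u')" by (rule ext_resp[OF sy endo u(3)])
          then have "raag_eq E w (ext (perm_aut \<sigma>) u')" using raag_eq.trans[OF raag_eq.sym[OF u(1)]] by blast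
          moreover have "set (map fst (ext (perm_aut \<sigma>) u')) \<subseteq> \<Delta>" using u(2) sub by (auto simp: ext_perm)
          ultimately show "w \<in> special E \<Delta>" unfolding special_def by blast
        qed
      next
        show "special E \<Delta> \<subseteq> image_of E (perm_aut \<sigma>) (special E \<Delta>)"
        proof
          fix w assume "w \<in> special E \<Delta>"
          then obtain w' where w': "set (map fst w') \<subseteq> \<Delta>" "raag_eq E w w'" unfolding special_def by blast
          define u where "u = map (\<lambda>x. (inv \<sigma> (fst x), snd x)) w'"
          have "ext (perm_aut \<sigma>) u = w'" unfolding u_def ext_perm using surj_f_inv_f[OF bij_is_surj[OF bij]]
            by (simp add: map_idI)
          then have "raag_eq E (ext (perm_aut \<sigma>) u) w" using raag_eq.sym[OF w'(2)] by simp
          moreover have "set (map fst u) \<subseteq> \<Delta>"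
          proof
            fix y assume "y \<in> set (map fst u)"
            then obtain z where "z \<in> set (map fst w')" "y = inv \<sigma> z" unfolding u_def by auto
            then have "z \<in> \<Delta>" using w'(1) by blast
            then obtain x where "x \<in> \<Delta>" "z = \<sigma> x" using img by blast
            then show "y \<in> \<Delta>" using \<open>y = inv \<sigma> z\<close> inj by simp
          qed
          then have "u \<in> special E \<Delta>" using raag_eq.refl unfolding special_def by blast
          ultimately show "w \<in> image_of E (perm_aut \<sigma>) (special E \<Delta>)" unfolding image_of_def by blast
        qed
      qed
      then show ?thesis unfolding stabilises_def by (intro exI[of _ "[]"]) (simp add: comp_inner_nil)
    qed
    have fx: "\<sigma> v = v" if D: "\<Delta> \<in> H" "v \<in> \<Delta>" for \<Delta> v
    proof (cases "{v} = UNIV")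
      case True
      then show ?thesis by (metis UNIV_I singletonD)
    next
      case False
      have "\<forall>f. inO E G H f \<longrightarrow> stabilises E f {v}" using sat_stab[OF sy irr _ D] by blast
      then have "{v} \<in> G" using sat False unfolding saturated_def by blast
      then show ?thesis using eqv unfolding G_equiv_def G_le_def by blast
    qed
    have triv: "acts_trivially E (perm_aut \<sigma>) \<Delta>" if D: "\<Delta> \<in> H" for \<Delta>
      unfolding acts_trivially_def
    proof (intro exI[of _ "[]"] allI impI)
      fix w :: "'v word" assume "set (map fst w) \<subseteq> \<Delta>"
      then have "ext (perm_aut \<sigma>) w = w" unfolding ext_perm using fx[OF D]
        by (intro map_idI) auto
      then show "raag_eq E (ext (comp (inner []) (perm_aut \<sigma>)) w) w"
        by (simp add: comp_inner_nil raag_eq.refl)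
    qed
    show "\<sigma> \<in> {\<sigma>. graph_aut E \<sigma> \<and> inO E G H (perm_aut \<sigma>)}"
      using ga out stab triv unfolding inO_def by blast
  qed
qed

end
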